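(* Let $n,m\ge 1$, let $A_1,\ldots,A_m$ be real symmetric $n\times n$ matrices and $a_1,\ldots,a_m\in\mathbb{R}^n$, and define $f:\mathbb{R}^n\to\mathbb{R}^m$ by $f(x)=(f_1(x),\ldots,f_m(x))$ with $f_i(x)=\frac12 x^TA_ix+a_i^Tx$. Let $A=[a_1~\ldots~a_m]\in\mathbb{R}^{n\times m}$, let $$L_{\rm new}:=\sqrt{\lambda_{\max}\Big(\sum_{i=1}^mA_i^TA_i\Big)},\qquad \nu:=\sigma_{\min}(A)=\sqrt{\lambda_{\min}(A^TA)},$$ assume $L_{\rm new}>0$, and set $\epsilon^*_{\rm new}:=\nu/(2L_{\rm new})$. Then for every $\epsilon$ with $0<\epsilon<\epsilon^*_{\rm new}$ and every $a\in\mathbb{R}^n$ with $\|a\|<2(\epsilon^*_{\rm new}-\epsilon)$, the set $$F_m(\epsilon,a)=\{f(x):~x\in\mathbb{R}^n,~\|x-a\|\le\epsilon\}$$ is a convex subset of $\mathbb{R}^m$.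
   Context: $\|\cdot\|$ on vectors is the Euclidean norm. $\lambda_{\max},\lambda_{\min}$ denote the largest and smallest eigenvalue of a symmetric matrix, and $\sigma_{\min}(A)$ denotes the smallest singular value of $A$, defined as $\sqrt{\lambda_{\min}(A^TA)}$. *)

theory Defs
  imports "HOL-Analysis.Analysis"
begin

text \<open>Real eigenvalues of a square matrix (for symmetric matrices these are all eigenvalues).\<close>
definition eigenvalues :: "real^'n^'n \<Rightarrow> real set" where
  "eigenvalues M = {l. \<exists>v. v \<noteq> 0 \<and> M *v v = l *\<^sub>R v}"

definition lambda_max :: "real^'n^'n \<Rightarrow> real" where
  "lambda_max M = Max (eigenvalues M)"

definition lambda_min :: "real^'n^'n \<Rightarrow> real" where
  "lambda_min M = Min (eigenvalues M)"

definition sigma_min :: "real^'m^'n \<Rightarrow> real" where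
  "sigma_min A = sqrt (lambda_min (transpose A ** A))"

definition symmetric_matrix :: "real^'n^'n \<Rightarrow> bool" where
  "symmetric_matrix M \<longleftrightarrow> transpose M = M"

end

theory Submission
  imports Defs
begin


lemma sym_dot:
  fixes M :: "real^'n^'n"
  assumes "symmetric_matrix M"
  shows "x \<bullet> (M *v y) = y \<bullet> (M *v x)"
proof -
  have "x \<bullet> (M *v y) = (x v* M) \<bullet> y" by (simp add: dot_lmul_matrix)
  also have "x v* M = transpose M *v x" by simp
  also have "transpose M = M" using assms by (simp add: symmetric_matrix_def)
  finally show ?thesis by (simp add: inner_commute)
qed

lemma ray_eig_max:
  fixes M :: "real^'n^'n"
  assumes sym: "symmetric_matrix M"
    and le: "\<And>y. y \<bullet> (M *v y) \<le> l * (y \<bullet> y)"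
    and eq: "x \<bullet> (M *v x) = l * (x \<bullet> x)"
  shows "M *v x = l *\<^sub>R x"
proof (rule ccontr)
  assume ne: "M *v x \<noteq> l *\<^sub>R x"
  define w where "w = M *v x - l *\<^sub>R x"
  define s where "s = w \<bullet> w"
  define q where "q = l * (w \<bullet> w) - w \<bullet> (M *v w)"
  have s0: "s > 0" using ne by (simp add: s_def w_def)
  have q0: "q \<ge> 0" using le[of w] by (simp add: q_def)
  have key: "2 * t * s \<le> t^2 * q" for t :: real
  proof -
    have h0: "(x + t *\<^sub>R w) \<bullet> (M *v (x + t *\<^sub>R w)) \<le> l * ((x + t *\<^sub>R w) \<bullet> (x + t *\<^sub>R w))"
      by (rule le)
    have h1: "(x + t *\<^sub>R w) \<bullet> (M *v (x + t *\<^sub>R w)) =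
        x \<bullet> (M *v x) + 2 * t * (w \<bullet> (M *v x)) + t^2 * (w \<bullet> (M *v w))"
      using sym_dot[OF sym, of x w]
      by (simp add: algebra_simps inner_add_left inner_add_right power2_eq_square)
    have h2: "(x + t *\<^sub>R w) \<bullet> (x + t *\<^sub>R w) = x \<bullet> x + 2 * t * (w \<bullet> x) + t^2 * (w \<bullet> w)"
      by (simp add: inner_add_left inner_add_right inner_commute[of x w] power2_eq_square algebra_simps)
    have h3: "w \<bullet> (M *v x) = s + l * (w \<bullet> x)"
    proof -
      have "M *v x = w + l *\<^sub>R x" by (simp add: w_def)
      thus ?thesis by (simp add: s_def inner_add_right)
    qed
    have "x \<bullet> (M *v x) + 2 * t * (s + l * (w \<bullet> x)) + t^2 * (w \<bullet> (M *v w))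
       \<le> l * (x \<bullet> x + 2 * t * (w \<bullet> x) + t^2 * (w \<bullet> w))" using h0 unfolding h1 h2 h3 .
    hence "l * (x \<bullet> x) + 2 * t * s + 2 * t * (l * (w \<bullet> x)) + t^2 * (w \<bullet> (M *v w))
       \<le> l * (x \<bullet> x) + 2 * t * (l * (w \<bullet> x)) + t^2 * (l * (w \<bullet> w))" using eq by (simp add: algebra_simps)
    thus ?thesis by (simp add: q_def right_diff_distrib)
  qed
  define t where "t = s / (q + 1)"
  have t0: "t > 0" using s0 q0 by (simp add: t_def)
  have "2 * t * s \<le> t^2 * q" by (rule key)
  hence "2 * s \<le> t * q" using t0 by (simp add: power2_eq_square)
  moreover have "t * q < s" using s0 q0 by (simp add: t_def field_simps)
  ultimately show False using s0 by linarith
qed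

lemma ray_eig_min:
  fixes M :: "real^'n^'n"
  assumes sym: "symmetric_matrix M"
    and le: "\<And>y. y \<bullet> (M *v y) \<ge> l * (y \<bullet> y)"
    and eq: "x \<bullet> (M *v x) = l * (x \<bullet> x)"
  shows "M *v x = l *\<^sub>R x"
proof (rule ccontr)
  assume ne: "M *v x \<noteq> l *\<^sub>R x"
  define w where "w = M *v x - l *\<^sub>R x"
  define s where "s = w \<bullet> w"
  define q where "q = w \<bullet> (M *v w) - l * (w \<bullet> w)"
  have s0: "s > 0" using ne by (simp add: s_def w_def)
  have q0: "q \<ge> 0" using le[of w] by (simp add: q_def)
  have key: "2 * t * s \<ge> - (t^2 * q)" for t :: real
  proof -
    have h0: "(x + t *\<^sub>R w) \<bullet> (M *v (x + t *\<^sub>R w)) \<ge> l * ((x + t *\<^sub>R w) \<bullet> (x + t *\<^sub>R w))"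
      by (rule le)
    have h1: "(x + t *\<^sub>R w) \<bullet> (M *v (x + t *\<^sub>R w)) =
        x \<bullet> (M *v x) + 2 * t * (w \<bullet> (M *v x)) + t^2 * (w \<bullet> (M *v w))"
      using sym_dot[OF sym, of x w]
      by (simp add: algebra_simps inner_add_left inner_add_right power2_eq_square)
    have h2: "(x + t *\<^sub>R w) \<bullet> (x + t *\<^sub>R w) = x \<bullet> x + 2 * t * (w \<bullet> x) + t^2 * (w \<bullet> w)"
      by (simp add: inner_add_left inner_add_right inner_commute[of x w] power2_eq_square algebra_simps)
    have h3: "w \<bullet> (M *v x) = s + l * (w \<bullet> x)"
    proof -
      have "M *v x = w + l *\<^sub>R x" by (simp add: w_def)
      thus ?thesis by (simp add: s_def inner_add_right)
    qed
    have "x \<bullet> (M *v x) + 2 * t * (s + l * (w \<bullet> x)) + t^2 * (w \<bullet> (M *v w))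
       \<ge> l * (x \<bullet> x + 2 * t * (w \<bullet> x) + t^2 * (w \<bullet> w))" using h0 unfolding h1 h2 h3 .
    hence "l * (x \<bullet> x) + 2 * t * s + 2 * t * (l * (w \<bullet> x)) + t^2 * (w \<bullet> (M *v w))
       \<ge> l * (x \<bullet> x) + 2 * t * (l * (w \<bullet> x)) + t^2 * (l * (w \<bullet> w))" using eq by (simp add: algebra_simps)
    thus ?thesis by (simp add: q_def right_diff_distrib)
  qed
  define t where "t = s / (q + 1)"
  have t0: "t > 0" using s0 q0 by (simp add: t_def)
  have "2 * (- t) * s \<ge> - ((- t)^2 * q)" by (rule key)
  hence "2 * t * s \<le> t^2 * q" by simp
  hence "2 * s \<le> t * q" using t0 by (simp add: power2_eq_square)
  moreover have "t * q < s" using s0 q0 by (simp add: t_def field_simps)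
  ultimately show False using s0 by linarith
qed

lemma eig_orth:
  fixes M :: "real^'n^'n"
  assumes sym: "symmetric_matrix M" and v: "M *v v = l *\<^sub>R v" and u: "M *v u = k *\<^sub>R u"
    and ne: "l \<noteq> k"
  shows "v \<bullet> u = 0"
proof -
  have "l * (v \<bullet> u) = u \<bullet> (M *v v)" using v by (simp add: inner_commute)
  also have "\<dots> = v \<bullet> (M *v u)" by (rule sym_dot[OF sym])
  also have "\<dots> = k * (v \<bullet> u)" using u by simp
  finally show ?thesis using ne by simp
qed

lemma eig_finite:
  fixes M :: "real^'n^'n"
  assumes sym: "symmetric_matrix M"
  shows "finite (eigenvalues M)"
proof -
  define E where "E = eigenvalues M"
  define V where "V l = (SOME v. v \<noteq> 0 \<and> M *v v = l *\<^sub>R v)" for l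
  have V: "V l \<noteq> 0 \<and> M *v V l = l *\<^sub>R V l" if "l \<in> E" for l
  proof -
    from that obtain v where "v \<noteq> 0 \<and> M *v v = l *\<^sub>R v" by (auto simp: E_def eigenvalues_def)
    thus ?thesis unfolding V_def by (rule someI)
  qed
  have orth: "V l \<bullet> V k = 0" if "l \<in> E" "k \<in> E" "l \<noteq> k" for l k
  proof -
    have a: "M *v V l = l *\<^sub>R V l" using V[OF that(1)] by simp
    have b: "M *v V k = k *\<^sub>R V k" using V[OF that(2)] by simp
    show ?thesis by (rule eig_orth[OF sym a b that(3)])
  qed
  have inj: "inj_on V E"
  proof (rule inj_onI)
    fix l k assume lk: "l \<in> E" "k \<in> E" "V l = V k"
    show "l = k"
    proof (rule ccontr)
      assume "l \<noteq> k"
      hence "V l \<bullet> V k = 0" using orth lk(1,2) by blast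
      hence "V l \<bullet> V l = 0" using lk(3) by simp
      thus False using V[OF lk(1)] by simp
    qed
  qed
  have "pairwise orthogonal (V ` E)"
  proof (unfold pairwise_def orthogonal_def, intro ballI impI)
    fix p q assume "p \<in> V ` E" "q \<in> V ` E" "p \<noteq> q"
    then obtain l k where "l \<in> E" "k \<in> E" "p = V l" "q = V k" by blast
    moreover have "l \<noteq> k" using \<open>p \<noteq> q\<close> calculation by blast
    ultimately show "p \<bullet> q = 0" using orth by blast
  qed
  moreover have "0 \<notin> V ` E"
  proof
    assume "0 \<in> V ` E"
    then obtain l where "l \<in> E" "0 = V l" by blast
    thus False using V[of l] by simp
  qed
  ultimately have "independent (V ` E)" by (rule pairwise_orthogonal_independent)
  hence "finite (V ` E)" using independent_bound by blast
  thus ?thesis using inj finite_imageD unfolding E_def by blast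
qed

lemma quad_scale:
  fixes M :: "real^'n^'n"
  shows "(c *\<^sub>R u) \<bullet> (M *v (c *\<^sub>R u)) = c^2 * (u \<bullet> (M *v u))"
  by (simp add: matrix_vector_mult_scaleR power2_eq_square)

lemma eig_max_exists:
  fixes M :: "real^'n^'n"
  assumes sym: "symmetric_matrix M"
  shows "\<exists>l\<in>eigenvalues M. \<forall>y. y \<bullet> (M *v y) \<le> l * (y \<bullet> y)"
proof -
  have "compact (sphere (0::real^'n) 1)" by simp
  moreover have "sphere (0::real^'n) 1 \<noteq> {}"
  proof -
    have "(axis undefined 1 :: real^'n) \<in> sphere 0 1" by simp
    thus ?thesis by blast
  qed
  moreover have "continuous_on (sphere 0 1) (\<lambda>y::real^'n. y \<bullet> (M *v y))"
    by (intro continuous_intros)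
  ultimately have "\<exists>x\<in>sphere 0 1. \<forall>y\<in>sphere 0 1. y \<bullet> (M *v y) \<le> x \<bullet> (M *v x)"
    by (rule continuous_attains_sup)
  then obtain x where x: "x \<in> sphere 0 1" and mx: "\<And>y. y \<in> sphere 0 1 \<Longrightarrow> y \<bullet> (M *v y) \<le> x \<bullet> (M *v x)"
    by blast
  define l where "l = x \<bullet> (M *v x)"
  have nx: "norm x = 1" using x by simp
  hence xx: "x \<bullet> x = 1" by (simp add: norm_eq_1)
  have all: "y \<bullet> (M *v y) \<le> l * (y \<bullet> y)" for y
  proof (cases "y = 0")
    case True thus ?thesis by simp
  next
    case False
    define u where "u = (1 / norm y) *\<^sub>R y"
    have u: "u \<in> sphere 0 1" using False by (simp add: u_def)
    have yu: "y = norm y *\<^sub>R u" using False by (simp add: u_def)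
    have "y \<bullet> (M *v y) = (norm y)^2 * (u \<bullet> (M *v u))" using quad_scale[of "norm y" u M] yu[symmetric] by simp
    also have "\<dots> \<le> (norm y)^2 * l" using mx[OF u] by (simp add: l_def mult_left_mono)
    finally show ?thesis by (simp add: power2_norm_eq_inner mult.commute)
  qed
  have "M *v x = l *\<^sub>R x" using ray_eig_max[OF sym all] xx by (simp add: l_def)
  moreover have "x \<noteq> 0" using nx by auto
  ultimately have "l \<in> eigenvalues M" by (auto simp: eigenvalues_def)
  thus ?thesis using all by blast
qed

lemma eig_min_exists:
  fixes M :: "real^'n^'n"
  assumes sym: "symmetric_matrix M"
  shows "\<exists>l\<in>eigenvalues M. \<forall>y. y \<bullet> (M *v y) \<ge> l * (y \<bullet> y)"
proof -
  have "compact (sphere (0::real^'n) 1)" by simp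
  moreover have "sphere (0::real^'n) 1 \<noteq> {}"
  proof -
    have "(axis undefined 1 :: real^'n) \<in> sphere 0 1" by simp
    thus ?thesis by blast
  qed
  moreover have "continuous_on (sphere 0 1) (\<lambda>y::real^'n. y \<bullet> (M *v y))"
    by (intro continuous_intros)
  ultimately have "\<exists>x\<in>sphere 0 1. \<forall>y\<in>sphere 0 1. y \<bullet> (M *v y) \<ge> x \<bullet> (M *v x)"
    by (rule continuous_attains_inf)
  then obtain x where x: "x \<in> sphere 0 1" and mx: "\<And>y. y \<in> sphere 0 1 \<Longrightarrow> y \<bullet> (M *v y) \<ge> x \<bullet> (M *v x)"
    by blast
  define l where "l = x \<bullet> (M *v x)"
  have nx: "norm x = 1" using x by simp
  hence xx: "x \<bullet> x = 1" by (simp add: norm_eq_1)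
  have all: "y \<bullet> (M *v y) \<ge> l * (y \<bullet> y)" for y
  proof (cases "y = 0")
    case True thus ?thesis by simp
  next
    case False
    define u where "u = (1 / norm y) *\<^sub>R y"
    have u: "u \<in> sphere 0 1" using False by (simp add: u_def)
    have yu: "y = norm y *\<^sub>R u" using False by (simp add: u_def)
    have "y \<bullet> (M *v y) = (norm y)^2 * (u \<bullet> (M *v u))" using quad_scale[of "norm y" u M] yu[symmetric] by simp
    also have "\<dots> \<ge> (norm y)^2 * l" using mx[OF u] by (simp add: l_def mult_left_mono)
    finally show ?thesis by (simp add: power2_norm_eq_inner mult.commute)
  qed
  have "M *v x = l *\<^sub>R x" using ray_eig_min[OF sym all] xx by (simp add: l_def)
  moreover have "x \<noteq> 0" using nx by auto
  ultimately have "l \<in> eigenvalues M" by (auto simp: eigenvalues_def)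
  thus ?thesis using all by blast
qed

lemma lambda_max_bound:
  fixes M :: "real^'n^'n"
  assumes sym: "symmetric_matrix M"
  shows "y \<bullet> (M *v y) \<le> lambda_max M * (y \<bullet> y)"
proof -
  obtain l where l: "l \<in> eigenvalues M" and b: "\<And>y. y \<bullet> (M *v y) \<le> l * (y \<bullet> y)"
    using eig_max_exists[OF sym] by blast
  have "l \<le> lambda_max M" unfolding lambda_max_def using eig_finite[OF sym] l by simp
  hence "l * (y \<bullet> y) \<le> lambda_max M * (y \<bullet> y)" by (simp add: mult_right_mono)
  thus ?thesis using b[of y] by linarith
qed

lemma lambda_min_bound:
  fixes M :: "real^'n^'n"
  assumes sym: "symmetric_matrix M"
  shows "y \<bullet> (M *v y) \<ge> lambda_min M * (y \<bullet> y)"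
proof -
  obtain l where l: "l \<in> eigenvalues M" and b: "\<And>y. y \<bullet> (M *v y) \<ge> l * (y \<bullet> y)"
    using eig_min_exists[OF sym] by blast
  have "l \<ge> lambda_min M" unfolding lambda_min_def using eig_finite[OF sym] l by simp
  hence "l * (y \<bullet> y) \<ge> lambda_min M * (y \<bullet> y)" by (simp add: mult_right_mono)
  thus ?thesis using b[of y] by linarith
qed



lemma sum_mvmult:
  fixes T :: "'i \<Rightarrow> real^'n^'m"
  shows "(sum T S) *v y = (\<Sum>i\<in>S. T i *v y)"
  by (induction S rule: infinite_finite_induct) (simp_all add: matrix_vector_mult_add_rdistrib)

lemma transpose_sum:
  fixes T :: "'i \<Rightarrow> real^'n^'m"
  shows "transpose (sum T S) = (\<Sum>i\<in>S. transpose (T i))"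
  by (simp add: transpose_def vec_eq_iff)

lemma quad_AtA:
  fixes B :: "real^'n^'m"
  shows "y \<bullet> ((transpose B ** B) *v y) = (B *v y) \<bullet> (B *v y)"
proof -
  have "(transpose B ** B) *v y = transpose B *v (B *v y)" by (simp add: matrix_vector_mul_assoc)
  also have "\<dots> = (B *v y) v* B" by simp
  finally have "y \<bullet> ((transpose B ** B) *v y) = ((B *v y) v* B) \<bullet> y" by (simp add: inner_commute)
  also have "\<dots> = (B *v y) \<bullet> (B *v y)" by (rule dot_lmul_matrix)
  finally show ?thesis .
qed

lemma sym_AtA:
  fixes B :: "real^'n^'m"
  shows "symmetric_matrix (transpose B ** B)"
  by (simp add: symmetric_matrix_def matrix_transpose_mul)

lemma cvec_bound:
  fixes As :: "'m::finite \<Rightarrow> real^'n^'n"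
  assumes L0: "L \<ge> 0"
    and B: "\<And>v. (\<Sum>i\<in>UNIV. (As i *v v) \<bullet> (As i *v v)) \<le> L^2 * (v \<bullet> v)"
  shows "norm (\<chi> i. u \<bullet> (As i *v w)) \<le> L * norm u * norm w"
proof -
  define c where "c = (\<chi> i. u \<bullet> (As i *v w))"
  have "(norm c)^2 = (\<Sum>i\<in>UNIV. c$i * c$i)"
    unfolding power2_norm_eq_inner inner_vec_def by simp
  also have "\<dots> = (\<Sum>i\<in>UNIV. (u \<bullet> (As i *v w))^2)"
    by (simp add: c_def power2_eq_square)
  also have "\<dots> \<le> (\<Sum>i\<in>UNIV. (norm u)^2 * ((As i *v w) \<bullet> (As i *v w)))"
  proof (rule sum_mono)
    fix i
    have "\<bar>u \<bullet> (As i *v w)\<bar> \<le> norm u * norm (As i *v w)" by (rule Cauchy_Schwarz_ineq2)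
    hence "\<bar>u \<bullet> (As i *v w)\<bar>^2 \<le> (norm u * norm (As i *v w))^2"
      by (intro power_mono) auto
    thus "(u \<bullet> (As i *v w))^2 \<le> (norm u)^2 * ((As i *v w) \<bullet> (As i *v w))"
      by (simp add: power_mult_distrib power2_norm_eq_inner)
  qed
  also have "\<dots> = (norm u)^2 * (\<Sum>i\<in>UNIV. (As i *v w) \<bullet> (As i *v w))"
    by (simp add: sum_distrib_left)
  also have "\<dots> \<le> (norm u)^2 * (L^2 * (w \<bullet> w))"
    by (intro mult_left_mono B) simp
  also have "\<dots> = (L * norm u * norm w)^2"
    by (simp add: power_mult_distrib power2_norm_eq_inner)
  finally have "(norm c)^2 \<le> (L * norm u * norm w)^2" .
  thus ?thesis unfolding c_def[symmetric] by (rule power2_le_imp_le) (simp add: L0)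
qed

lemma v_bound:
  fixes As :: "'m::finite \<Rightarrow> real^'n^'n"
  assumes sym: "\<And>i. symmetric_matrix (As i)" and L0: "L \<ge> 0"
    and B: "\<And>v. (\<Sum>i\<in>UNIV. (As i *v v) \<bullet> (As i *v v)) \<le> L^2 * (v \<bullet> v)"
  shows "norm (\<Sum>i\<in>UNIV. r$i *\<^sub>R (As i *v x)) \<le> L * norm x * norm r"
proof -
  define v where "v = (\<Sum>i\<in>UNIV. r$i *\<^sub>R (As i *v x))"
  define c where "c = (\<chi> i. x \<bullet> (As i *v v))"
  have "v \<bullet> v = (\<Sum>i\<in>UNIV. r$i * ((As i *v x) \<bullet> v))"
    by (simp add: v_def[of] inner_sum_left)
  also have "\<dots> = (\<Sum>i\<in>UNIV. r$i * (x \<bullet> (As i *v v)))"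
    using sym_dot[OF sym] by (simp add: inner_commute)
  also have "\<dots> = r \<bullet> c" by (simp add: c_def inner_vec_def)
  also have "\<dots> \<le> norm r * norm c" by (rule norm_cauchy_schwarz)
  also have "\<dots> \<le> norm r * (L * norm x * norm v)"
    unfolding c_def by (intro mult_left_mono cvec_bound[OF L0 B]) simp
  finally have h: "norm v * norm v \<le> (L * norm x * norm r) * norm v"
    by (simp add: power2_norm_eq_inner[symmetric] power2_eq_square mult_ac)
  show ?thesis
  proof (cases "norm v = 0")
    case True thus ?thesis using L0 unfolding v_def[symmetric] by simp
  next
    case False
    hence "norm v > 0" by simp
    thus ?thesis using h unfolding v_def[symmetric] by simp
  qed
qed

lemma quad_expand:
  fixes M :: "real^'n^'n"
  assumes sym: "symmetric_matrix M"
  shows "1/2 * ((x + h) \<bullet> (M *v (x + h))) + a \<bullet> (x + h)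
       = (1/2 * (x \<bullet> (M *v x)) + a \<bullet> x) + (M *v x + a) \<bullet> h + 1/2 * (h \<bullet> (M *v h))"
proof -
  have e: "(x + h) \<bullet> (M *v (x + h)) = x \<bullet> (M *v x) + x \<bullet> (M *v h) + h \<bullet> (M *v x) + h \<bullet> (M *v h)"
    by (simp add: matrix_vector_right_distrib inner_add_left inner_add_right)
  have s: "x \<bullet> (M *v h) = h \<bullet> (M *v x)" by (rule sym_dot[OF sym])
  have t: "(M *v x + a) \<bullet> h = h \<bullet> (M *v x) + a \<bullet> h" by (simp add: inner_add_left inner_commute[of "M *v x" h])
  show ?thesis unfolding e t s by (simp add: inner_add_right algebra_simps)
qed

lemma sqrt_step:
  fixes R u N :: real
  assumes R: "R > 0" and u: "u \<le> 2 * R^2" and N: "N \<ge> 0" and NN: "N^2 \<le> R^2 - u"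
  shows "N \<le> R - u / (2 * R)"
proof -
  have "u / (2 * R) \<le> R" using u R by (simp add: field_simps power2_eq_square)
  hence e0: "R - u / (2 * R) \<ge> 0" by simp
  have "(R - u / (2 * R))^2 = R^2 - u + (u / (2 * R))^2"
    using R by (simp add: power2_diff field_simps power2_eq_square)
  hence "N^2 \<le> (R - u / (2 * R))^2" using NN by (smt (verit) zero_le_power2)
  thus ?thesis using e0 by (rule power2_le_imp_le)
qed



lemma descent:
  fixes F :: "real^'n \<Rightarrow> real^'m" and x g z a :: "real^'n" and y r Jg Qg :: "real^'m"
  assumes min: "\<And>w. norm (w - a) \<le> eps \<Longrightarrow> norm (F x - y) + mu * norm (x - z) \<le> norm (F w - y) + mu * norm (w - z)"
    and inside: "norm (x - a) < eps"
    and expn: "\<And>t. F (x - t *\<^sub>R g) - y = r - t *\<^sub>R Jg + t^2 *\<^sub>R Qg"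
    and r: "r = F x - y" and rne: "r \<noteq> 0"
    and rg: "r \<bullet> Jg = g \<bullet> g"
    and gb: "norm g > mu * norm r" and mu0: "mu \<ge> 0"
  shows False
proof -
  define R where "R = norm r"
  define G where "G = norm g"
  define K where "K = Jg \<bullet> Jg"
  define C where "C = norm Qg"
  define D where "D = K / (2 * R) + C"
  define cg where "cg = G^2 / R - mu * G"
  define \<rho> where "\<rho> = eps - norm (x - a)"
  have R0: "R > 0" using rne by (simp add: R_def)
  have G0: "G > 0" using gb mu0 R0 unfolding G_def R_def
    by (smt (verit) mult_nonneg_nonneg norm_ge_zero)
  have K0: "K \<ge> 0" by (simp add: K_def)
  have C0: "C \<ge> 0" by (simp add: C_def)
  have D0: "D \<ge> 0" using K0 C0 R0 by (simp add: D_def)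
  have cg0: "cg > 0"
  proof -
    have "cg = G * (G - mu * R) / R" using R0 by (simp add: cg_def field_simps power2_eq_square)
    moreover have "G - mu * R > 0" using gb by (simp add: G_def R_def)
    ultimately show ?thesis using G0 R0 by simp
  qed
  have rho0: "\<rho> > 0" using inside by (simp add: \<rho>_def)
  define t where "t = min (\<rho> / (G + 1)) (min (R^2 / (G^2 + 1)) (cg / (D + 1)))"
  have "R^2 / (G^2 + 1) > 0" using R0 by (intro divide_pos_pos) (simp, smt (verit) zero_le_power2)
  hence t0: "t > 0" using rho0 G0 R0 cg0 D0 by (simp add: t_def)
  have tG: "t * G \<le> \<rho>"
  proof -
    have "t \<le> \<rho> / (G + 1)" by (simp add: t_def)
    hence "t * G \<le> \<rho> / (G + 1) * G" using G0 by (intro mult_right_mono) auto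
    also have "\<dots> \<le> \<rho>" using G0 rho0 by (simp add: field_simps)
    finally show ?thesis .
  qed
  have tG2: "t * G^2 \<le> R^2"
  proof -
    have "t \<le> R^2 / (G^2 + 1)" by (simp add: t_def)
    hence "t * G^2 \<le> R^2 / (G^2 + 1) * G^2" by (intro mult_right_mono) auto
    also have "\<dots> \<le> R^2"
    proof -
      have p: "G^2 + 1 > 0" by (smt (verit) zero_le_power2)
      have "R^2 * G^2 \<le> R^2 * (G^2 + 1)" by (intro mult_left_mono) auto
      thus ?thesis using p by (simp add: pos_divide_le_eq)
    qed
    finally show ?thesis .
  qed
  have tD: "t * D < cg"
  proof -
    have "t \<le> cg / (D + 1)" by (simp add: t_def)
    hence "t * D \<le> cg / (D + 1) * D" using D0 by (intro mult_right_mono) auto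
    also have "\<dots> < cg" using D0 cg0 by (simp add: field_simps)
    finally show ?thesis .
  qed
  define w where "w = x - t *\<^sub>R g"
  have wa: "norm (w - a) \<le> eps"
  proof -
    have "norm (w - a) = norm ((x - a) - t *\<^sub>R g)" by (simp add: w_def algebra_simps)
    also have "\<dots> \<le> norm (x - a) + norm (t *\<^sub>R g)" by (rule norm_triangle_ineq4)
    also have "\<dots> = norm (x - a) + t * G" using t0 by (simp add: G_def)
    finally have "norm (w - a) \<le> norm (x - a) + t * G" .
    thus ?thesis using tG by (simp add: \<rho>_def)
  qed
  define u where "u = 2 * t * G^2 - t^2 * K"
  define N where "N = norm (r - t *\<^sub>R Jg)"
  have NN: "N^2 = R^2 - u"
  proof -
    have "N^2 = (r - t *\<^sub>R Jg) \<bullet> (r - t *\<^sub>R Jg)" by (simp add: N_def power2_norm_eq_inner)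
    also have "\<dots> = r \<bullet> r - 2 * t * (r \<bullet> Jg) + t^2 * K"
      by (simp add: inner_diff_left inner_diff_right inner_commute K_def power2_eq_square algebra_simps)
    finally show ?thesis using rg
      by (simp add: u_def R_def G_def power2_norm_eq_inner)
  qed
  have u2: "u \<le> 2 * R^2"
  proof -
    have "t^2 * K \<ge> 0" using K0 by simp
    moreover have "2 * t * G^2 = 2 * (t * G^2)" by simp
    ultimately show ?thesis using tG2 unfolding u_def by linarith
  qed
  have Nb: "N \<le> R - u / (2 * R)"
  proof (rule sqrt_step[OF R0 u2])
    show "N \<ge> 0" unfolding N_def by (rule norm_ge_zero)
    show "N^2 \<le> R^2 - u" using NN by simp
  qed
  have Fw: "norm (F w - y) \<le> N + t^2 * C"
  proof -
    have "F w - y = (r - t *\<^sub>R Jg) + t^2 *\<^sub>R Qg" using expn[of t] by (simp add: w_def)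
    hence "norm (F w - y) \<le> norm (r - t *\<^sub>R Jg) + norm (t^2 *\<^sub>R Qg)" by (metis norm_triangle_ineq)
    thus ?thesis by (simp add: N_def C_def)
  qed
  have wz: "norm (w - z) \<le> norm (x - z) + t * G"
  proof -
    have "norm (w - z) = norm ((x - z) - t *\<^sub>R g)" by (simp add: w_def algebra_simps)
    also have "\<dots> \<le> norm (x - z) + norm (t *\<^sub>R g)" by (rule norm_triangle_ineq4)
    also have "\<dots> = norm (x - z) + t * G" using t0 by (simp add: G_def)
    finally show ?thesis .
  qed
  have "norm (F w - y) + mu * norm (w - z) \<le> (R - u / (2 * R) + t^2 * C) + mu * (norm (x - z) + t * G)"
    using Fw Nb wz mu0 by (smt (verit) mult_left_mono)
  also have "\<dots> = R + mu * norm (x - z) - t * (cg - t * D)"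
    using R0 by (simp add: u_def cg_def D_def field_simps power2_eq_square)
  also have "\<dots> < R + mu * norm (x - z)"
    using t0 tD by simp
  also have "\<dots> = norm (F x - y) + mu * norm (x - z)" by (simp add: R_def r)
  finally show False using min[OF wa] by linarith
qed



lemma convex_comb_norm:
  fixes p q :: "real^'n"
  shows "(norm ((1 - th) *\<^sub>R p + th *\<^sub>R q))^2
     = (1 - th) * (norm p)^2 + th * (norm q)^2 - th * (1 - th) * (norm (p - q))^2"
proof -
  have "(norm ((1 - th) *\<^sub>R p + th *\<^sub>R q))^2 = (1-th)^2 * (p \<bullet> p) + 2 * th * (1 - th) * (p \<bullet> q) + th^2 * (q \<bullet> q)"
    unfolding power2_norm_eq_inner by (simp add: inner_add_left inner_add_right inner_commute[of q p] power2_eq_square algebra_simps)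
  moreover have "(norm (p - q))^2 = p \<bullet> p - 2 * (p \<bullet> q) + q \<bullet> q"
    unfolding power2_norm_eq_inner by (simp add: inner_diff_left inner_diff_right inner_commute[of q p])
  ultimately show ?thesis unfolding power2_norm_eq_inner by (simp add: power2_eq_square algebra_simps)
qed

theorem theorem3:
  fixes As :: "'m::finite \<Rightarrow> real^'n^'n"
    and as :: "'m \<Rightarrow> real^'n::finite"
    and f :: "real^'n \<Rightarrow> real^'m"
    and A :: "real^'m^'n"
    and L_new nu eps_star eps :: real
    and a :: "real^'n"
  assumes sym: "\<And>i. symmetric_matrix (As i)"
    and f_def: "\<And>x. f x = (\<chi> i. (1/2) * (x \<bullet> (As i *v x)) + as i \<bullet> x)"
    and A_def: "A = (\<chi> r c. as c $ r)"
    and L_def: "L_new = sqrt (lambda_max (\<Sum>i\<in>UNIV. transpose (As i) ** As i))"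
    and nu_def: "nu = sigma_min A"
    and L_pos: "L_new > 0"
    and eps_star_def: "eps_star = nu / (2 * L_new)"
    and eps_pos: "0 < eps" and eps_lt: "eps < eps_star"
    and a_small: "norm a < 2 * (eps_star - eps)"
  shows "convex (f ` {x. norm (x - a) \<le> eps})"
proof -
  define L where Ldef: "L = L_new"
  have L0: "L > 0" using L_pos by (simp add: Ldef)
  define M where "M = (\<Sum>i\<in>UNIV. transpose (As i) ** As i)"
  have symM: "symmetric_matrix M"
    unfolding M_def symmetric_matrix_def transpose_sum by (simp add: matrix_transpose_mul)
  have quadM: "v \<bullet> (M *v v) = (\<Sum>i\<in>UNIV. (As i *v v) \<bullet> (As i *v v))" for v
    by (simp add: M_def sum_mvmult inner_sum_right quad_AtA)
  have lmax: "lambda_max M > 0" using L_pos by (simp add: L_def M_def)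
  have LL: "L^2 = lambda_max M" using lmax by (simp add: Ldef L_def M_def)
  have Bd: "(\<Sum>i\<in>UNIV. (As i *v v) \<bullet> (As i *v v)) \<le> L^2 * (v \<bullet> v)" for v
    using lambda_max_bound[OF symM, of v] quadM[of v] LL by simp
  have nu0: "nu > 0"
  proof -
    have "eps_star > 0" using eps_pos eps_lt by simp
    thus ?thesis using L_pos by (simp add: eps_star_def zero_less_divide_iff)
  qed
  define B where "B = transpose A ** A"
  have nuB: "nu = sqrt (lambda_min B)" by (simp add: nu_def sigma_min_def B_def)
  have lminpos: "lambda_min B > 0" using nu0 nuB by simp
  have nu2: "nu^2 = lambda_min B" using lminpos nuB by simp
  have Ar: "norm (A *v r) \<ge> nu * norm r" for r
  proof -
    have "(nu * norm r)^2 = lambda_min B * (r \<bullet> r)" by (simp add: power_mult_distrib nu2 power2_norm_eq_inner)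
    also have "\<dots> \<le> r \<bullet> (B *v r)" by (rule lambda_min_bound) (simp add: B_def sym_AtA)
    also have "\<dots> = (norm (A *v r))^2" by (simp add: B_def quad_AtA power2_norm_eq_inner)
    finally show ?thesis by (rule power2_le_imp_le) simp
  qed
  have Amv: "A *v r = (\<Sum>c\<in>UNIV. r$c *\<^sub>R as c)" for r
    unfolding A_def by (simp add: matrix_vector_mult_def vec_eq_iff mult.commute)
  define Q where "Q h = (\<chi> i. h \<bullet> (As i *v h))" for h
  define J where "J x h = (\<chi> i. (As i *v x + as i) \<bullet> h)" for x h
  define JT where "JT x r = (\<Sum>i\<in>UNIV. r$i *\<^sub>R (As i *v x + as i))" for x and r :: "real^'m"
  have fexp: "f (x + h) = f x + J x h + (1/2) *\<^sub>R Q h" for x h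
    unfolding f_def J_def Q_def vec_eq_iff
    by (simp only: vec_lambda_beta vector_add_component vector_scaleR_component real_scaleR_def quad_expand[OF sym] simp_thms)
  have Jlin: "J x (c *\<^sub>R h) = c *\<^sub>R J x h" for x c h
    by (simp add: J_def vec_eq_iff)
  have Qhom: "Q (c *\<^sub>R h) = c^2 *\<^sub>R Q h" for c h
    by (simp add: Q_def vec_eq_iff matrix_vector_mult_scaleR power2_eq_square)
  have rJ: "r \<bullet> J x h = JT x r \<bullet> h" for r x h
  proof -
    have "r \<bullet> J x h = (\<Sum>i\<in>UNIV. r$i * ((As i *v x + as i) \<bullet> h))"
      by (simp add: J_def inner_vec_def[of r])
    also have "\<dots> = JT x r \<bullet> h" by (simp add: JT_def inner_sum_left)
    finally show ?thesis .
  qed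
  have Qb: "norm (Q h) \<le> L * (norm h)^2" for h
    using cvec_bound[of L As, OF _ Bd, of h h] L0 by (simp add: Q_def power2_eq_square mult.assoc)
  have JTb: "norm (JT x r) \<ge> (nu - L * norm x) * norm r" for x r
  proof -
    define V where "V = (\<Sum>i\<in>UNIV. r$i *\<^sub>R (As i *v x))"
    have "JT x r = A *v r + V"
      by (simp add: JT_def V_def Amv scaleR_add_right sum.distrib)
    hence "norm (JT x r) \<ge> norm (A *v r) - norm V" by (metis norm_diff_ineq)
    moreover have "norm V \<le> L * norm x * norm r"
      unfolding V_def by (rule v_bound[OF sym _ Bd]) (use L0 in simp)
    ultimately show ?thesis using Ar[of r] by (simp add: algebra_simps)
  qed
  have feq: "f = (\<lambda>x. \<chi> i. (1/2) * (x \<bullet> (As i *v x)) + as i \<bullet> x)" using f_def by auto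
  have fcont: "continuous_on S f" for S
    unfolding feq by (intro continuous_intros)
  have La: "L * norm a < nu - 2 * L * eps"
  proof -
    have "norm a < nu / L - 2 * eps" using a_small by (simp add: eps_star_def Ldef field_simps)
    hence "L * norm a < L * (nu / L - 2 * eps)" using L0 by simp
    thus ?thesis using L0 by (simp add: algebra_simps)
  qed
  define mu where "mu = (L * eps + (nu - L * (norm a + eps))) / 2"
  have mue: "mu = (nu - L * norm a) / 2" by (simp add: mu_def algebra_simps)
  have mu1: "L * eps < mu"
  proof -
    have h: "2 * (L * eps) < nu - L * norm a" using La by (simp add: algebra_simps)
    show ?thesis unfolding mue using h by simp
  qed
  have mu2: "mu < nu - L * (norm a + eps)"
  proof -
    have e: "nu - L * (norm a + eps) = 2 * mu - L * eps" by (simp add: mue algebra_simps)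
    show ?thesis unfolding e using mu1 by linarith
  qed
  have mu0: "mu > 0" using mu1 L0 eps_pos by (smt (verit) mult_pos_pos)
  show ?thesis
  unfolding convex_alt
  proof (intro ballI allI impI)
    fix p q and th :: real
    assume p: "p \<in> f ` {x. norm (x - a) \<le> eps}" and q: "q \<in> f ` {x. norm (x - a) \<le> eps}"
      and th: "0 \<le> th \<and> th \<le> 1"
    obtain x1 where x1: "norm (x1 - a) \<le> eps" "p = f x1" using p by blast
    obtain x2 where x2: "norm (x2 - a) \<le> eps" "q = f x2" using q by blast
    define y where "y = (1 - th) *\<^sub>R p + th *\<^sub>R q"
    show "y \<in> f ` {x. norm (x - a) \<le> eps}"
    proof (cases "th = 0 \<or> th = 1 \<or> x1 = x2")
      case True
      then consider "th = 0" | "th = 1" | "x1 = x2" by blast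
      thus ?thesis
      proof cases
        case 1 thus ?thesis using p by (simp add: y_def)
      next
        case 2 thus ?thesis using q by (simp add: y_def)
      next
        case 3
        hence "y = f x1" using x1 x2 by (simp add: y_def algebra_simps)
        thus ?thesis using x1 by blast
      qed
    next
      case False
      hence th01: "0 < th" "th < 1" "x1 \<noteq> x2" using th by auto
      define d where "d = x1 - x2"
      define c where "c = th * (1 - th) * (norm d)^2"
      have c0: "c > 0" using th01 by (simp add: c_def d_def)
      define z where "z = (1 - th) *\<^sub>R x1 + th *\<^sub>R x2"
      have za2: "(norm (z - a))^2 \<le> eps^2 - c"
      proof -
        have "z - a = (1 - th) *\<^sub>R (x1 - a) + th *\<^sub>R (x2 - a)" by (simp add: z_def algebra_simps)
        hence "(norm (z - a))^2 = (1 - th) * (norm (x1 - a))^2 + th * (norm (x2 - a))^2 - c"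
          using convex_comb_norm[of th "x1 - a" "x2 - a"] by (simp add: c_def d_def)
        moreover have "(norm (x1 - a))^2 \<le> eps^2" using x1(1) by (simp add: power_mono)
        moreover have "(norm (x2 - a))^2 \<le> eps^2" using x2(1) by (simp add: power_mono)
        ultimately have n: "(norm (z - a))^2 = (1 - th) * (norm (x1 - a))^2 + th * (norm (x2 - a))^2 - c"
          and n1: "(norm (x1 - a))^2 \<le> eps^2" and n2: "(norm (x2 - a))^2 \<le> eps^2" by auto
        have "(1 - th) * (norm (x1 - a))^2 \<le> (1 - th) * eps^2" using n1 th01 by (intro mult_left_mono) auto
        moreover have "th * (norm (x2 - a))^2 \<le> th * eps^2" using n2 th01 by (intro mult_left_mono) auto
        moreover have "(1 - th) * eps^2 + th * eps^2 = eps^2" by (simp add: algebra_simps)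
        ultimately show ?thesis using n by linarith
      qed
      have za: "norm (z - a) \<le> eps - c / (2 * eps)"
      proof (rule sqrt_step[OF eps_pos])
        show "c \<le> 2 * eps^2" using za2 c0 by (smt (verit) zero_le_power2)
        show "norm (z - a) \<ge> 0" by simp
        show "(norm (z - a))^2 \<le> eps^2 - c" by (rule za2)
      qed
      have e1: "x1 = z + th *\<^sub>R d" by (simp add: z_def d_def algebra_simps)
      have e2: "x2 = z + (- (1 - th)) *\<^sub>R d" by (simp add: z_def d_def algebra_simps)
      have yfz: "y - f z = (th * (1 - th) / 2) *\<^sub>R Q d"
      proof -
        have f1: "f x1 = f z + th *\<^sub>R J z d + (1/2) *\<^sub>R (th^2 *\<^sub>R Q d)"
          unfolding e1 fexp by (simp only: Jlin Qhom)
        have f2: "f x2 = f z + (- (1 - th)) *\<^sub>R J z d + (1/2) *\<^sub>R ((- (1 - th))^2 *\<^sub>R Q d)"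
          unfolding e2 fexp by (simp only: Jlin Qhom)
        show ?thesis unfolding y_def x1(2) x2(2) f1 f2
          by (simp add: vec_eq_iff power2_eq_square field_simps)
      qed
      have fzy: "norm (f z - y) \<le> L * c / 2"
      proof -
        have "norm (f z - y) = norm (y - f z)" by (rule norm_minus_commute)
        also have "\<dots> = th * (1 - th) / 2 * norm (Q d)" using th01 by (simp add: yfz)
        also have "\<dots> \<le> th * (1 - th) / 2 * (L * (norm d)^2)"
          using Qb[of d] th01 by (intro mult_left_mono) auto
        also have "\<dots> = L * c / 2" by (simp add: c_def)
        finally show ?thesis .
      qed
      define psi where "psi w = norm (f w - y) + mu * norm (w - z)" for w
      have "compact (cball a eps)" by simp
      moreover have "cball a eps \<noteq> {}" using eps_pos by simp
      moreover have "continuous_on (cball a eps) psi"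
        unfolding psi_def by (intro continuous_intros fcont)
      ultimately have "\<exists>xs\<in>cball a eps. \<forall>w\<in>cball a eps. psi xs \<le> psi w"
        by (rule continuous_attains_inf)
      then obtain xs where xs: "xs \<in> cball a eps" and xmin: "\<And>w. w \<in> cball a eps \<Longrightarrow> psi xs \<le> psi w"
        by blast
      have zin: "z \<in> cball a eps"
      proof -
        have "c / (2 * eps) \<ge> 0" using c0 eps_pos by simp
        thus ?thesis using za by (simp add: dist_norm norm_minus_commute)
      qed
      have "psi xs \<le> psi z" by (rule xmin[OF zin])
      also have "psi z = norm (f z - y)" by (simp add: psi_def)
      finally have "psi xs \<le> L * c / 2" using fzy by simp
      hence mxz: "mu * norm (xs - z) \<le> L * c / 2" unfolding psi_def by (smt (verit) norm_ge_zero)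
      have xz: "norm (xs - z) < c / (2 * eps)"
      proof (rule ccontr)
        assume "\<not> ?thesis"
        hence "c / (2 * eps) \<le> norm (xs - z)" by simp
        hence "mu * (c / (2 * eps)) \<le> L * c / 2" using mxz mu0
          by (smt (verit) mult_left_mono)
        hence "mu * c \<le> (L * eps) * c" using eps_pos by (simp add: field_simps)
        hence "mu \<le> L * eps" using c0 by simp
        thus False using mu1 by simp
      qed
      have xa: "norm (xs - a) < eps"
      proof -
        have "norm (xs - a) \<le> norm (xs - z) + norm (z - a)" using norm_triangle_ineq[of "xs - z" "z - a"] by simp
        thus ?thesis using xz za by simp
      qed
      have xnorm: "norm xs \<le> norm a + eps"
        using norm_triangle_ineq2[of xs a] xa by simp
      show ?thesis
      proof (cases "f xs = y")
        case True
        moreover have "norm (xs - a) \<le> eps" using xa by simp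
        ultimately show ?thesis by blast
      next
        case False
        define r where "r = f xs - y"
        define g where "g = JT xs r"
        have rne: "r \<noteq> 0" using False by (simp add: r_def)
        have "norm g \<ge> (nu - L * norm xs) * norm r" unfolding g_def by (rule JTb)
        moreover have "(nu - L * norm xs) * norm r \<ge> (nu - L * (norm a + eps)) * norm r"
          using xnorm L0 by (intro mult_right_mono) auto
        moreover have "(nu - L * (norm a + eps)) * norm r > mu * norm r"
          using mu2 rne by simp
        ultimately have gb: "norm g > mu * norm r" by linarith
        show ?thesis
        proof (rule FalseE, rule descent[where F = f and x = xs and g = g and z = z and a = a
              and y = y and r = r and Jg = "J xs g" and Qg = "(1/2) *\<^sub>R Q g" and mu = mu and eps = eps])
          fix w :: "real^'n" assume "norm (w - a) \<le> eps"
          hence "w \<in> cball a eps" by (simp add: dist_norm norm_minus_commute)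
          from xmin[OF this] show "norm (f xs - y) + mu * norm (xs - z) \<le> norm (f w - y) + mu * norm (w - z)"
            by (simp add: psi_def)
        next
          show "norm (xs - a) < eps" by (rule xa)
        next
          fix t :: real
          have "f (xs - t *\<^sub>R g) = f (xs + (- t) *\<^sub>R g)" by simp
          also have "\<dots> = f xs + (- t) *\<^sub>R J xs g + (1/2) *\<^sub>R ((- t)^2 *\<^sub>R Q g)"
            by (simp only: fexp Jlin Qhom)
          finally show "f (xs - t *\<^sub>R g) - y = r - t *\<^sub>R J xs g + t^2 *\<^sub>R ((1/2) *\<^sub>R Q g)"
            by (simp add: r_def algebra_simps)
        next
          show "r = f xs - y" by (simp add: r_def)
        next
          show "r \<noteq> 0" by (rule rne)
        next
          show "r \<bullet> J xs g = g \<bullet> g" by (simp add: rJ g_def)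
        next
          show "norm g > mu * norm r" by (rule gb)
        next
          show "mu \<ge> 0" using mu0 by simp
        qed
      qed
    qed
  qed
qed


end
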